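(* Let $(X,(\cdot,\cdot|\cdot))$ be a 2-inner product space over $\mathbb{K}\in\{\mathbb{R},\mathbb{C}\}$, let $n$ be a positive integer, let $x,y_1,\dots,y_n,z\in X$ and $c_1,\dots,c_n\in\mathbb{K}$. Define the three quantities $A_1=\max_{1\le i\le n}|c_i|^2\sum_{i=1}^n\|y_i|z\|^2$; $A_2(\alpha)=\big(\sum_{i=1}^n|c_i|^{2\alpha}\big)^{1/\alpha}\big(\sum_{i=1}^n\|y_i|z\|^{2\beta}\big)^{1/\beta}$ for $\alpha>1$, $\frac1\alpha+\frac1\beta=1$; $A_3=\sum_{i=1}^n|c_i|^2\max_{1\le i\le n}\|y_i|z\|^2$; and $B_1=\max_{1\le i\ne j\le n}|c_ic_j|\sum_{1\le i\ne j\le n}|(y_i,y_j|z)|$; $B_2(\gamma)=\Big[\big(\sum_{i=1}^n|c_i|^{\gamma}\big)^2-\sum_{i=1}^n|c_i|^{2\gamma}\Big]^{1/\gamma}\big(\sum_{1\le i\ne j\le n}|(y_i,y_j|z)|^{\delta}\big)^{1/\delta}$ for $\gamma>1$, $\frac1\gamma+\frac1\delta=1$; $B_3=\Big[\big(\sum_{i=1}^n|c_i|\big)^2-\sum_{i=1}^n|c_i|^2\Big]\max_{1\le i\ne j\le n}|(y_i,y_j|z)|$. Then for every choice of $A\in\{A_1,A_2(\alpha),A_3\}$ and $B\in\{B_1,B_2(\gamma),B_3\}$ (with any admissible $\alpha,\gamma$), \[ \Big|\sum_{i=1}^n c_i(x,y_i|z)\Big|^2\le \|x|z\|^2\,(A+B).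 \]
   Context: A 2-inner product on a linear space $X$ of dimension greater than $1$ over $\mathbb{K}$ ($\mathbb{K}=\mathbb{R}$ or $\mathbb{C}$) is a function $(\cdot,\cdot|\cdot):X\times X\times X\to\mathbb{K}$ such that for all $x,x',y,z\in X$ and $\alpha\in\mathbb{K}$: (i) $(x,x|z)\ge 0$, and $(x,x|z)=0$ iff $x$ and $z$ are linearly dependent; (ii) $(x,x|z)=(z,z|x)$; (iii) $(y,x|z)=\overline{(x,y|z)}$; (iv) $(\alpha x,y|z)=\alpha(x,y|z)$; (v) $(x+x',y|z)=(x,y|z)+(x',y|z)$. The associated 2-norm is $\|x|z\|=\sqrt{(x,x|z)}$. Sums and maxima indexed by $1\le i\ne j\le n$ run over all ordered pairs $(i,j)$ with $i,j\in\{1,\dots,n\}$, $i\ne j$. *)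

theory Defs
  imports "HOL-Analysis.Analysis"
begin

text \<open>Scalars: a field K which is either the reals (embedded in the complex numbers)
  or the complex numbers.  X is an additive abelian group carrying a K-scalar
  multiplication scal (only scalars in K are meaningful); the 2-inner product
  takes values in K.\<close>

definition lin_dep2 :: "complex set \<Rightarrow> (complex \<Rightarrow> 'a::ab_group_add \<Rightarrow> 'a) \<Rightarrow> 'a \<Rightarrow> 'a \<Rightarrow> bool" where
  "lin_dep2 K scal x z \<longleftrightarrow>
     (\<exists>a\<in>K. \<exists>b\<in>K. (a \<noteq> 0 \<or> b \<noteq> 0) \<and> scal a x + scal b z = 0)"

definition vector_space_K :: "complex set \<Rightarrow> (complex \<Rightarrow> 'a::ab_group_add \<Rightarrow> 'a) \<Rightarrow> bool" where
  "vector_space_K K scal \<longleftrightarrow>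
     (K = \<real> \<or> K = UNIV) \<and>
     (\<forall>a\<in>K. \<forall>x y. scal a (x + y) = scal a x + scal a y) \<and>
     (\<forall>a\<in>K. \<forall>b\<in>K. \<forall>x. scal (a + b) x = scal a x + scal b x) \<and>
     (\<forall>a\<in>K. \<forall>b\<in>K. \<forall>x. scal (a * b) x = scal a (scal b x)) \<and>
     (\<forall>x. scal 1 x = x)"

definition two_inner_product_space ::
  "complex set \<Rightarrow> (complex \<Rightarrow> 'a::ab_group_add \<Rightarrow> 'a) \<Rightarrow> ('a \<Rightarrow> 'a \<Rightarrow> 'a \<Rightarrow> complex) \<Rightarrow> bool" where
  "two_inner_product_space K scal ip \<longleftrightarrow>
     vector_space_K K scal \<and>
     (\<exists>u v. \<not> lin_dep2 K scal u v) \<and>   \<comment> \<open>dimension greater than 1\<close>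
     (\<forall>x y z. ip x y z \<in> K) \<and>
     (\<forall>x z. Im (ip x x z) = 0 \<and> Re (ip x x z) \<ge> 0) \<and>
     (\<forall>x z. ip x x z = 0 \<longleftrightarrow> lin_dep2 K scal x z) \<and>
     (\<forall>x z. ip x x z = ip z z x) \<and>
     (\<forall>x y z. ip y x z = cnj (ip x y z)) \<and>
     (\<forall>\<alpha>\<in>K. \<forall>x y z. ip (scal \<alpha> x) y z = \<alpha> * ip x y z) \<and>
     (\<forall>x x' y z. ip (x + x') y z = ip x y z + ip x' y z)"

definition norm2sq :: "('a \<Rightarrow> 'a \<Rightarrow> 'a \<Rightarrow> complex) \<Rightarrow> 'a \<Rightarrow> 'a \<Rightarrow> real" where
  "norm2sq ip x z = Re (ip x x z)"

definition offdiag :: "nat \<Rightarrow> (nat \<times> nat) set" where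
  "offdiag n = {(i, j). i \<in> {1..n} \<and> j \<in> {1..n} \<and> i \<noteq> j}"

definition A1 :: "('a \<Rightarrow> 'a \<Rightarrow> 'a \<Rightarrow> complex) \<Rightarrow> nat \<Rightarrow> (nat \<Rightarrow> complex) \<Rightarrow> (nat \<Rightarrow> 'a) \<Rightarrow> 'a \<Rightarrow> real" where
  "A1 ip n c y z = Max ((\<lambda>i. (cmod (c i))\<^sup>2) ` {1..n}) * (\<Sum>i=1..n. norm2sq ip (y i) z)"

definition A2 :: "('a \<Rightarrow> 'a \<Rightarrow> 'a \<Rightarrow> complex) \<Rightarrow> nat \<Rightarrow> (nat \<Rightarrow> complex) \<Rightarrow> (nat \<Rightarrow> 'a) \<Rightarrow> 'a \<Rightarrow> real \<Rightarrow> real \<Rightarrow> real" where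
  "A2 ip n c y z \<alpha> \<beta> =
     (\<Sum>i=1..n. cmod (c i) powr (2 * \<alpha>)) powr (1 / \<alpha>) *
     (\<Sum>i=1..n. norm2sq ip (y i) z powr \<beta>) powr (1 / \<beta>)"

definition A3 :: "('a \<Rightarrow> 'a \<Rightarrow> 'a \<Rightarrow> complex) \<Rightarrow> nat \<Rightarrow> (nat \<Rightarrow> complex) \<Rightarrow> (nat \<Rightarrow> 'a) \<Rightarrow> 'a \<Rightarrow> real" where
  "A3 ip n c y z = (\<Sum>i=1..n. (cmod (c i))\<^sup>2) * Max ((\<lambda>i. norm2sq ip (y i) z) ` {1..n})"

definition B1 :: "('a \<Rightarrow> 'a \<Rightarrow> 'a \<Rightarrow> complex) \<Rightarrow> nat \<Rightarrow> (nat \<Rightarrow> complex) \<Rightarrow> (nat \<Rightarrow> 'a) \<Rightarrow> 'a \<Rightarrow> real" where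
  "B1 ip n c y z = Max ((\<lambda>(i, j). cmod (c i * c j)) ` offdiag n) *
     (\<Sum>(i, j)\<in>offdiag n. cmod (ip (y i) (y j) z))"

definition B2 :: "('a \<Rightarrow> 'a \<Rightarrow> 'a \<Rightarrow> complex) \<Rightarrow> nat \<Rightarrow> (nat \<Rightarrow> complex) \<Rightarrow> (nat \<Rightarrow> 'a) \<Rightarrow> 'a \<Rightarrow> real \<Rightarrow> real \<Rightarrow> real" where
  "B2 ip n c y z \<gamma> \<delta> =
     ((\<Sum>i=1..n. cmod (c i) powr \<gamma>)\<^sup>2 - (\<Sum>i=1..n. cmod (c i) powr (2 * \<gamma>))) powr (1 / \<gamma>) *
     (\<Sum>(i, j)\<in>offdiag n. cmod (ip (y i) (y j) z) powr \<delta>) powr (1 / \<delta>)"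

definition B3 :: "('a \<Rightarrow> 'a \<Rightarrow> 'a \<Rightarrow> complex) \<Rightarrow> nat \<Rightarrow> (nat \<Rightarrow> complex) \<Rightarrow> (nat \<Rightarrow> 'a) \<Rightarrow> 'a \<Rightarrow> real" where
  "B3 ip n c y z = ((\<Sum>i=1..n. cmod (c i))\<^sup>2 - (\<Sum>i=1..n. (cmod (c i))\<^sup>2)) *
     Max ((\<lambda>(i, j). cmod (ip (y i) (y j) z)) ` offdiag n)"

end

theory Submission
  imports Defs
begin


lemma holder_sum:
  fixes a b :: "'i \<Rightarrow> real"
  assumes fin: "finite I" and a: "\<And>i. i \<in> I \<Longrightarrow> a i \<ge> 0" and b: "\<And>i. i \<in> I \<Longrightarrow> b i \<ge> 0"
    and p: "p > 1" and q: "q > 1" and pq: "1/p + 1/q = 1"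
  shows "(\<Sum>i\<in>I. a i * b i) \<le> (\<Sum>i\<in>I. a i powr p) powr (1/p) * (\<Sum>i\<in>I. b i powr q) powr (1/q)"
proof -
  define P where "P = (\<Sum>i\<in>I. a i powr p)"
  define Q where "Q = (\<Sum>i\<in>I. b i powr q)"
  have P0: "P \<ge> 0" and Q0: "Q \<ge> 0" unfolding P_def Q_def by (auto intro: sum_nonneg)
  show ?thesis
  proof (cases "P = 0 \<or> Q = 0")
    case True
    then have "\<forall>i\<in>I. a i = 0 \<or> b i = 0"
      unfolding P_def Q_def using fin a b
      by (auto simp: sum_nonneg_eq_0_iff)
    then have "(\<Sum>i\<in>I. a i * b i) = 0" by (auto intro: sum.neutral)
    then show ?thesis by simp
  next
    case False
    then have Pp: "P > 0" and Qp: "Q > 0" using P0 Q0 by auto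
    define s where "s = P powr (1/p)"
    define t where "t = Q powr (1/q)"
    have sp: "s > 0" "t > 0" using Pp Qp by (auto simp: s_def t_def)
    have sP: "s powr p = P" using Pp p by (simp add: s_def powr_powr)
    have tQ: "t powr q = Q" using Qp q by (simp add: t_def powr_powr)
    have "(a i / s) * (b i / t) \<le> a i powr p / (P * p) + b i powr q / (Q * q)" if "i \<in> I" for i
    proof -
      have "(a i / s) * (b i / t) \<le> (a i / s) powr p / p + (b i / t) powr q / q"
        by (rule Youngs_inequality) (use p q pq a b that sp in auto)
      also have "\<dots> = a i powr p / (P * p) + b i powr q / (Q * q)"
        using a[OF that] b[OF that] sp by (simp add: powr_divide sP tQ)
      finally show ?thesis .
    qed
    then have "(\<Sum>i\<in>I. (a i / s) * (b i / t)) \<le> (\<Sum>i\<in>I. a i powr p / (P * p) + b i powr q / (Q * q))"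
      by (rule sum_mono)
    also have "\<dots> = P / (P * p) + Q / (Q * q)"
      by (simp add: sum.distrib P_def Q_def sum_divide_distrib)
    also have "\<dots> = 1" using Pp Qp pq by simp
    finally have "(\<Sum>i\<in>I. a i * b i) / (s * t) \<le> 1"
      by (simp add: sum_divide_distrib)
    then show ?thesis using sp by (simp add: s_def t_def P_def Q_def divide_le_eq)
  qed
qed



context
  fixes K scal and ip :: "'a::ab_group_add \<Rightarrow> 'a \<Rightarrow> 'a \<Rightarrow> complex"
  assumes H: "two_inner_product_space K scal ip"
begin

lemma K_cases: "K = \<real> \<or> K = UNIV"
  using H by (simp add: two_inner_product_space_def vector_space_K_def)

lemma K_cnj: "c \<in> K \<Longrightarrow> cnj c \<in> K"
  using K_cases by (auto simp: Reals_cnj_iff)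

lemma K_neg_mult: "c \<in> K \<Longrightarrow> - (complex_of_real t * c) \<in> K"
  using K_cases by auto

lemma ip_add1: "ip (u + v) w z = ip u w z + ip v w z"
  using H unfolding two_inner_product_space_def by blast

lemma ip_scal1: "a \<in> K \<Longrightarrow> ip (scal a u) w z = a * ip u w z"
  using H unfolding two_inner_product_space_def by blast

lemma ip_cnj: "ip v u z = cnj (ip u v z)"
  using H unfolding two_inner_product_space_def by blast

lemma ip_self: "Im (ip u u z) = 0" "Re (ip u u z) \<ge> 0"
  using H unfolding two_inner_product_space_def by blast+

lemma ip_self_real: "ip u u z = complex_of_real (norm2sq ip u z)"
  using ip_self[of u z] by (simp add: norm2sq_def complex_eq_iff)

lemma norm2sq_nonneg: "norm2sq ip u z \<ge> 0"
  using ip_self(2)[of u z] by (simp add: norm2sq_def)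

lemma ip_self_cmod: "cmod (ip u u z) = norm2sq ip u z"
proof -
  have "cmod (ip u u z) = cmod (complex_of_real (norm2sq ip u z))" by (subst ip_self_real) (rule refl)
  also have "\<dots> = norm2sq ip u z" using norm2sq_nonneg[of u z] by simp
  finally show ?thesis .
qed

lemma ip_add2: "ip w (u + v) z = ip w u z + ip w v z"
proof -
  have "ip w (u + v) z = cnj (ip (u + v) w z)" by (rule ip_cnj)
  also have "\<dots> = cnj (ip u w z) + cnj (ip v w z)" by (simp add: ip_add1)
  finally show ?thesis by (simp add: ip_cnj[of u w] ip_cnj[of v w])
qed

lemma ip_scal2: "a \<in> K \<Longrightarrow> ip w (scal a u) z = cnj a * ip w u z"
proof -
  assume a: "a \<in> K"
  have "ip w (scal a u) z = cnj (ip (scal a u) w z)" by (rule ip_cnj)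
  also have "\<dots> = cnj a * cnj (ip u w z)" using a by (simp add: ip_scal1)
  finally show ?thesis by (simp add: ip_cnj[of u w])
qed

lemma ip_zero2: "ip w 0 z = 0"
  using ip_add2[of w 0 0 z] by simp

lemma ip_sum2: "finite S \<Longrightarrow> ip w (\<Sum>i\<in>S. f i) z = (\<Sum>i\<in>S. ip w (f i) z)"
  by (induction S rule: finite_induct) (auto simp: ip_zero2 ip_add2)

lemma ip_zero1: "ip 0 w z = 0"
  using ip_add1[of 0 0 w z] by simp

lemma ip_sum1: "finite S \<Longrightarrow> ip (\<Sum>i\<in>S. f i) w z = (\<Sum>i\<in>S. ip (f i) w z)"
  by (induction S rule: finite_induct) (auto simp: ip_zero1 ip_add1)

lemma quad_aux:
  fixes a b m :: real
  assumes "a \<ge> 0" "b \<ge> 0" "m \<ge> 0" and Q: "\<And>t. a - 2*t*m + t^2*m*b \<ge> 0"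
  shows "m \<le> a * b"
proof (cases "m = 0")
  case True then show ?thesis using assms by simp
next
  case False
  show ?thesis
  proof (cases "b = 0")
    case True
    have "a - 2*((a+1)/(2*m))*m + ((a+1)/(2*m))^2*m*b \<ge> 0" by (rule Q)
    with True False show ?thesis by simp
  next
    case False
    have "a - 2*(1/b)*m + (1/b)^2*m*b \<ge> 0" by (rule Q)
    with False \<open>b \<ge> 0\<close> have "a - m/b \<ge> 0" by (simp add: power2_eq_square field_simps)
    with False \<open>b \<ge> 0\<close> show ?thesis by (simp add: field_simps)
  qed
qed

lemma cauchy_schwarz2:
  "(cmod (ip x w z))\<^sup>2 \<le> norm2sq ip x z * norm2sq ip w z"
proof (rule quad_aux)
  show "norm2sq ip x z \<ge> 0" "norm2sq ip w z \<ge> 0" using ip_self by (auto simp: norm2sq_def)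
  show "(cmod (ip x w z))\<^sup>2 \<ge> 0" by simp
  fix t :: real
  define \<mu> where "\<mu> = ip x w z"
  define s where "s = - (complex_of_real t * \<mu>)"
  have sK: "s \<in> K"
  proof -
    have "ip x w z \<in> K" using H unfolding two_inner_product_space_def by blast
    then show ?thesis unfolding s_def \<mu>_def by (rule K_neg_mult)
  qed
  have "Re (ip (x + scal s w) (x + scal s w) z) \<ge> 0" by (rule ip_self(2))
  also have "ip (x + scal s w) (x + scal s w) z
      = ip x x z + cnj s * \<mu> + s * cnj \<mu> + s * cnj s * ip w w z"
  proof -
    have e1: "ip (scal s w) x z = s * cnj \<mu>" using sK by (simp add: ip_scal1 \<mu>_def flip: ip_cnj)
    have e2: "ip x (scal s w) z = cnj s * \<mu>" using sK by (simp add: ip_scal2 \<mu>_def)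
    have e3: "ip (scal s w) (scal s w) z = s * cnj s * ip w w z" using sK by (simp add: ip_scal1 ip_scal2)
    show ?thesis by (simp add: ip_add1 ip_add2 e1 e2 e3)
  qed
  finally have F: "0 \<le> Re (ip x x z + cnj s * \<mu> + s * cnj \<mu> + s * cnj s * ip w w z)" .
  have "Re (ip x x z + cnj s * \<mu> + s * cnj \<mu> + s * cnj s * ip w w z)
      = norm2sq ip x z - 2 * t * (cmod \<mu>)\<^sup>2 + t\<^sup>2 * (cmod \<mu>)\<^sup>2 * norm2sq ip w z"
    unfolding ip_self_real[of w] ip_self_real[of x] s_def cmod_power2
    by (simp add: power2_eq_square algebra_simps)
  with F show "norm2sq ip x z - 2 * t * (cmod (ip x w z))\<^sup>2 + t\<^sup>2 * (cmod (ip x w z))\<^sup>2 * norm2sq ip w z \<ge> 0"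
    by (simp add: \<mu>_def)
qed

end


lemma offdiag_finite: "finite (offdiag n)"
  by (rule finite_subset[of _ "{1..n} \<times> {1..n}"]) (auto simp: offdiag_def)

lemma diag_split:
  fixes f :: "nat \<Rightarrow> nat \<Rightarrow> 'b::comm_monoid_add"
  shows "(\<Sum>i=1..n. \<Sum>j=1..n. f i j) = (\<Sum>i=1..n. f i i) + (\<Sum>(i,j)\<in>offdiag n. f i j)"
proof -
  have "(\<Sum>i=1..n. \<Sum>j=1..n. f i j) = (\<Sum>(i,j)\<in>{1..n}\<times>{1..n}. f i j)"
    by (simp add: sum.cartesian_product)
  also have "{1..n}\<times>{1..n} = (\<lambda>i. (i,i)) ` {1..n} \<union> offdiag n"
    by (auto simp: offdiag_def)
  also have "(\<Sum>(i,j)\<in>(\<lambda>i. (i,i)) ` {1..n} \<union> offdiag n. f i j)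
      = (\<Sum>(i,j)\<in>(\<lambda>i. (i,i)) ` {1..n}. f i j) + (\<Sum>(i,j)\<in>offdiag n. f i j)"
    by (rule sum.union_disjoint) (simp, rule offdiag_finite, force simp: offdiag_def)
  also have "(\<Sum>(i,j)\<in>(\<lambda>i. (i,i)) ` {1..n}. f i j) = (\<Sum>i=1..n. f i i)"
    by (subst sum.reindex) (auto simp: inj_on_def)
  finally show ?thesis .
qed

lemma offdiag_prod:
  fixes a :: "nat \<Rightarrow> real"
  shows "(\<Sum>(i,j)\<in>offdiag n. a i * a j) = (\<Sum>i=1..n. a i)\<^sup>2 - (\<Sum>i=1..n. (a i)\<^sup>2)"
proof -
  have "(\<Sum>i=1..n. a i)\<^sup>2 = (\<Sum>i=1..n. \<Sum>j=1..n. a i * a j)"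
    by (simp add: power2_eq_square sum_product)
  also have "\<dots> = (\<Sum>i=1..n. (a i)\<^sup>2) + (\<Sum>(i,j)\<in>offdiag n. a i * a j)"
    by (subst diag_split) (simp add: power2_eq_square)
  finally show ?thesis by simp
qed

context
  fixes K scal and ip :: "'a::ab_group_add \<Rightarrow> 'a \<Rightarrow> 'a \<Rightarrow> complex"
  assumes H: "two_inner_product_space K scal ip"
begin

lemma main_bound:
  assumes cK: "\<forall>i\<in>{1..n}. c i \<in> K"
  shows "(cmod (\<Sum>i=1..n. c i * ip x (y i) z))\<^sup>2 \<le> norm2sq ip x z *
     ((\<Sum>i=1..n. (cmod (c i))\<^sup>2 * norm2sq ip (y i) z)
      + (\<Sum>(i,j)\<in>offdiag n. cmod (c i) * cmod (c j) * cmod (ip (y i) (y j) z)))"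
proof -
  define w where "w = (\<Sum>i=1..n. scal (cnj (c i)) (y i))"
  have cnjK: "cnj (c i) \<in> K" if "i \<in> {1..n}" for i
    using K_cnj[OF H] cK that by auto
  have xw: "ip x w z = (\<Sum>i=1..n. c i * ip x (y i) z)"
    unfolding w_def by (simp add: ip_sum2[OF H] ip_scal2[OF H] cnjK)
  have ww0: "ip w w z = (\<Sum>j=1..n. \<Sum>i=1..n. cnj (c i) * c j * ip (y i) (y j) z)"
    unfolding w_def
    by (simp add: ip_sum2[OF H] ip_sum1[OF H] ip_scal2[OF H] ip_scal1[OF H] cnjK sum_distrib_left mult_ac)
  have ww: "ip w w z = (\<Sum>i=1..n. \<Sum>j=1..n. cnj (c i) * c j * ip (y i) (y j) z)"
    by (subst sum.swap) (rule ww0)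
  have "norm2sq ip w z = Re (ip w w z)" by (simp add: norm2sq_def)
  also have "\<dots> \<le> cmod (ip w w z)" by (rule complex_Re_le_cmod)
  also have "\<dots> \<le> (\<Sum>i=1..n. \<Sum>j=1..n. cmod (c i) * cmod (c j) * cmod (ip (y i) (y j) z))"
    unfolding ww
    by (rule order_trans[OF norm_sum sum_mono], rule order_trans[OF norm_sum sum_mono])
       (simp add: norm_mult)
  also have "\<dots> = (\<Sum>i=1..n. (cmod (c i))\<^sup>2 * norm2sq ip (y i) z)
      + (\<Sum>(i,j)\<in>offdiag n. cmod (c i) * cmod (c j) * cmod (ip (y i) (y j) z))"
    unfolding diag_split
    by (simp add: ip_self_cmod[OF H] power2_eq_square)
  finally have W: "norm2sq ip w z \<le> \<dots>" .
  have "(cmod (\<Sum>i=1..n. c i * ip x (y i) z))\<^sup>2 \<le> norm2sq ip x z * norm2sq ip w z"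
    using cauchy_schwarz2[OF H, of x w z] xw by simp
  also have "\<dots> \<le> norm2sq ip x z * ((\<Sum>i=1..n. (cmod (c i))\<^sup>2 * norm2sq ip (y i) z)
      + (\<Sum>(i,j)\<in>offdiag n. cmod (c i) * cmod (c j) * cmod (ip (y i) (y j) z)))"
    by (rule mult_left_mono[OF W]) (rule norm2sq_nonneg[OF H])
  finally show ?thesis .
qed

end


lemma sq_powr: "(u::real) \<ge> 0 \<Longrightarrow> (u\<^sup>2) powr a = u powr (2 * a)"
proof (cases "u = 0")
  case True then show ?thesis by simp
next
  case False
  assume "u \<ge> 0"
  with False have u: "u > 0" by simp
  have "u\<^sup>2 = u powr 2" using powr_numeral[OF less_imp_le[OF u], of "num.Bit0 num.One"] by simp
  then show ?thesis by (simp add: powr_powr)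
qed

lemma D_le_A:
  fixes N :: "nat \<Rightarrow> real" and c :: "nat \<Rightarrow> complex"
  assumes N: "\<And>i. N i \<ge> 0" and n: "n \<ge> 1" and \<alpha>: "\<alpha> > 1" and ab: "1/\<alpha> + 1/\<beta> = 1"
  shows "(\<Sum>i=1..n. (cmod (c i))\<^sup>2 * N i) \<le> Max ((\<lambda>i. (cmod (c i))\<^sup>2) ` {1..n}) * (\<Sum>i=1..n. N i)"
    and "(\<Sum>i=1..n. (cmod (c i))\<^sup>2 * N i) \<le> (\<Sum>i=1..n. cmod (c i) powr (2 * \<alpha>)) powr (1 / \<alpha>) *
     (\<Sum>i=1..n. N i powr \<beta>) powr (1 / \<beta>)"
    and "(\<Sum>i=1..n. (cmod (c i))\<^sup>2 * N i) \<le> (\<Sum>i=1..n. (cmod (c i))\<^sup>2) * Max ((\<lambda>i. N i) ` {1..n})"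
proof -
  show "(\<Sum>i=1..n. (cmod (c i))\<^sup>2 * N i) \<le> Max ((\<lambda>i. (cmod (c i))\<^sup>2) ` {1..n}) * (\<Sum>i=1..n. N i)"
    unfolding sum_distrib_left
    by (rule sum_mono, rule mult_right_mono) (auto intro: Max_ge N)
  show "(\<Sum>i=1..n. (cmod (c i))\<^sup>2 * N i) \<le> (\<Sum>i=1..n. (cmod (c i))\<^sup>2) * Max ((\<lambda>i. N i) ` {1..n})"
    unfolding sum_distrib_right
    by (rule sum_mono, rule mult_left_mono) (auto intro: Max_ge N)
  have \<beta>: "\<beta> > 1"
  proof -
    have "1/\<beta> = 1 - 1/\<alpha>" using ab by simp
    moreover have "0 < 1 - 1/\<alpha>" "1 - 1/\<alpha> < 1" using \<alpha> by auto
    ultimately have "0 < 1/\<beta>" "1/\<beta> < 1" by auto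
    then show ?thesis by (simp add: field_simps split: if_splits)
  qed
  have "(\<Sum>i=1..n. (cmod (c i))\<^sup>2 * N i) \<le> (\<Sum>i=1..n. ((cmod (c i))\<^sup>2) powr \<alpha>) powr (1 / \<alpha>) *
     (\<Sum>i=1..n. N i powr \<beta>) powr (1 / \<beta>)"
    by (rule holder_sum) (use N \<alpha> \<beta> ab in auto)
  then show "(\<Sum>i=1..n. (cmod (c i))\<^sup>2 * N i) \<le> (\<Sum>i=1..n. cmod (c i) powr (2 * \<alpha>)) powr (1 / \<alpha>) *
     (\<Sum>i=1..n. N i powr \<beta>) powr (1 / \<beta>)"
    by (simp add: sq_powr)
qed

lemma O_le_B:
  fixes G :: "nat \<Rightarrow> nat \<Rightarrow> real" and c :: "nat \<Rightarrow> complex"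
  assumes G: "\<And>i j. G i j \<ge> 0" and \<gamma>: "\<gamma> > 1" and gd: "1/\<gamma> + 1/\<delta> = 1"
  shows "(\<Sum>(i,j)\<in>offdiag n. cmod (c i) * cmod (c j) * G i j)
      \<le> Max ((\<lambda>(i, j). cmod (c i * c j)) ` offdiag n) * (\<Sum>(i, j)\<in>offdiag n. G i j)"
    and "(\<Sum>(i,j)\<in>offdiag n. cmod (c i) * cmod (c j) * G i j)
      \<le> ((\<Sum>i=1..n. cmod (c i) powr \<gamma>)\<^sup>2 - (\<Sum>i=1..n. cmod (c i) powr (2 * \<gamma>))) powr (1 / \<gamma>) *
     (\<Sum>(i, j)\<in>offdiag n. G i j powr \<delta>) powr (1 / \<delta>)"
    and "(\<Sum>(i,j)\<in>offdiag n. cmod (c i) * cmod (c j) * G i j)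
      \<le> ((\<Sum>i=1..n. cmod (c i))\<^sup>2 - (\<Sum>i=1..n. (cmod (c i))\<^sup>2)) *
     Max ((\<lambda>(i, j). G i j) ` offdiag n)"
proof -
  show "(\<Sum>(i,j)\<in>offdiag n. cmod (c i) * cmod (c j) * G i j)
      \<le> Max ((\<lambda>(i, j). cmod (c i * c j)) ` offdiag n) * (\<Sum>(i, j)\<in>offdiag n. G i j)"
    unfolding sum_distrib_left
  proof (rule sum_mono)
    fix p assume p: "p \<in> offdiag n"
    obtain i j where pij: "p = (i,j)" by (cases p)
    have "cmod (c i * c j) \<le> Max ((\<lambda>(i, j). cmod (c i * c j)) ` offdiag n)"
      by (rule Max_ge) (use p pij offdiag_finite in force)+
    then show "(case p of (i, j) \<Rightarrow> cmod (c i) * cmod (c j) * G i j)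
        \<le> Max ((\<lambda>(i, j). cmod (c i * c j)) ` offdiag n) * (case p of (i, j) \<Rightarrow> G i j)"
      using G[of i j] by (simp add: pij norm_mult mult_right_mono)
  qed
  show "(\<Sum>(i,j)\<in>offdiag n. cmod (c i) * cmod (c j) * G i j)
      \<le> ((\<Sum>i=1..n. cmod (c i))\<^sup>2 - (\<Sum>i=1..n. (cmod (c i))\<^sup>2)) *
     Max ((\<lambda>(i, j). G i j) ` offdiag n)"
    unfolding offdiag_prod[symmetric] sum_distrib_right
  proof (rule sum_mono)
    fix p assume p: "p \<in> offdiag n"
    obtain i j where pij: "p = (i,j)" by (cases p)
    have "G i j \<le> Max ((\<lambda>(i, j). G i j) ` offdiag n)"
      by (rule Max_ge) (use p pij offdiag_finite in force)+
    then show "(case p of (i, j) \<Rightarrow> cmod (c i) * cmod (c j) * G i j)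
        \<le> (case p of (i, j) \<Rightarrow> cmod (c i) * cmod (c j)) * Max ((\<lambda>(i, j). G i j) ` offdiag n)"
      by (simp add: pij mult_left_mono)
  qed
  have \<delta>: "\<delta> > 1"
  proof -
    have "1/\<delta> = 1 - 1/\<gamma>" using gd by simp
    moreover have "0 < 1 - 1/\<gamma>" "1 - 1/\<gamma> < 1" using \<gamma> by auto
    ultimately have "0 < 1/\<delta>" "1/\<delta> < 1" by auto
    then show ?thesis by (simp add: field_simps split: if_splits)
  qed
  have "(\<Sum>(i,j)\<in>offdiag n. cmod (c i) * cmod (c j) * G i j)
      = (\<Sum>p\<in>offdiag n. (case p of (i,j) \<Rightarrow> cmod (c i) * cmod (c j)) * (case p of (i,j) \<Rightarrow> G i j))"
    by (rule sum.cong) auto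
  also have "\<dots> \<le> (\<Sum>p\<in>offdiag n. (case p of (i,j) \<Rightarrow> cmod (c i) * cmod (c j)) powr \<gamma>) powr (1/\<gamma>)
      * (\<Sum>p\<in>offdiag n. (case p of (i,j) \<Rightarrow> G i j) powr \<delta>) powr (1/\<delta>)"
    by (rule holder_sum) (use G \<gamma> \<delta> gd offdiag_finite in auto)
  also have "(\<Sum>p\<in>offdiag n. (case p of (i,j) \<Rightarrow> cmod (c i) * cmod (c j)) powr \<gamma>)
      = (\<Sum>(i,j)\<in>offdiag n. cmod (c i) powr \<gamma> * cmod (c j) powr \<gamma>)"
    by (rule sum.cong) (auto simp: powr_mult)
  also have "\<dots> = (\<Sum>i=1..n. cmod (c i) powr \<gamma>)\<^sup>2 - (\<Sum>i=1..n. (cmod (c i) powr \<gamma>)\<^sup>2)"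
    by (rule offdiag_prod)
  also have "(\<Sum>i=1..n. (cmod (c i) powr \<gamma>)\<^sup>2) = (\<Sum>i=1..n. cmod (c i) powr (2 * \<gamma>))"
  proof (rule sum.cong)
    fix i
    have "cmod (c i) powr (2 * \<gamma>) = cmod (c i) powr (\<gamma> + \<gamma>)" by (simp only: mult_2)
    also have "\<dots> = cmod (c i) powr \<gamma> * cmod (c i) powr \<gamma>" by (rule powr_add)
    finally show "(cmod (c i) powr \<gamma>)\<^sup>2 = cmod (c i) powr (2 * \<gamma>)" by (simp only: power2_eq_square)
  qed simp
  also have "(\<Sum>p\<in>offdiag n. (case p of (i,j) \<Rightarrow> G i j) powr \<delta>) = (\<Sum>(i, j)\<in>offdiag n. G i j powr \<delta>)"
    by (rule sum.cong) auto
  finally show "(\<Sum>(i,j)\<in>offdiag n. cmod (c i) * cmod (c j) * G i j)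
      \<le> ((\<Sum>i=1..n. cmod (c i) powr \<gamma>)\<^sup>2 - (\<Sum>i=1..n. cmod (c i) powr (2 * \<gamma>))) powr (1 / \<gamma>) *
     (\<Sum>(i, j)\<in>offdiag n. G i j powr \<delta>) powr (1 / \<delta>)" .
qed

theorem theorem3p1:
  fixes K :: "complex set" and scal :: "complex \<Rightarrow> 'a::ab_group_add \<Rightarrow> 'a"
    and ip :: "'a \<Rightarrow> 'a \<Rightarrow> 'a \<Rightarrow> complex"
    and n :: nat and x z :: 'a and y :: "nat \<Rightarrow> 'a" and c :: "nat \<Rightarrow> complex"
    and \<alpha> \<beta> \<gamma> \<delta> A B :: real
  assumes "two_inner_product_space K scal ip"
    and "n \<ge> 1"
    and "\<forall>i\<in>{1..n}. c i \<in> K"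
    and "\<alpha> > 1" and "1 / \<alpha> + 1 / \<beta> = 1"
    and "\<gamma> > 1" and "1 / \<gamma> + 1 / \<delta> = 1"
    and "A \<in> {A1 ip n c y z, A2 ip n c y z \<alpha> \<beta>, A3 ip n c y z}"
    and "B \<in> {B1 ip n c y z, B2 ip n c y z \<gamma> \<delta>, B3 ip n c y z}"
  shows "(cmod (\<Sum>i=1..n. c i * ip x (y i) z))\<^sup>2 \<le> norm2sq ip x z * (A + B)"
proof -
  note H = assms(1)
  have N: "\<And>i. norm2sq ip (y i) z \<ge> 0" by (rule norm2sq_nonneg[OF H])
  have x0: "norm2sq ip x z \<ge> 0" by (rule norm2sq_nonneg[OF H])
  have DA: "(\<Sum>i=1..n. (cmod (c i))\<^sup>2 * norm2sq ip (y i) z) \<le> A"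
    using assms(8) D_le_A[OF N assms(2) assms(4) assms(5), of c]
    by (auto simp: A1_def A2_def A3_def)
  have OB: "(\<Sum>(i,j)\<in>offdiag n. cmod (c i) * cmod (c j) * cmod (ip (y i) (y j) z)) \<le> B"
    using assms(9) O_le_B[of "\<lambda>i j. cmod (ip (y i) (y j) z)", OF _ assms(6) assms(7), of c n]
    by (auto simp: B1_def B2_def B3_def)
  show ?thesis
    using main_bound[OF H assms(3), of x y z] mult_left_mono[OF add_mono[OF DA OB] x0]
    by linarith
qed

end
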